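(* The synchronous nonlinear fixed-point iteration $\mathbf{x}^{p+1} = \mathbf{h}(\mathbf{x}^p)$ is locally convergent, that is, if $\mathbf{x}_*$ is a fixed point of $\mathbf{h}$, it is a point of attraction of the synchronous iteration.
   Context: Let $\mathbf{A}\in\mathbb{R}^{n\times n}$ be partitioned into square $b\times b$ blocks, and $S_B$ a set of block indices containing all diagonal blocks. The unknowns (entries of the block ILU factors $\mathbf{L}_{ij}$, $i>j$, and $\mathbf{U}_{ij}$, $i\le j$, for $(i,j)\in S_B$) form $\mathbf{x}\in\mathbb{R}^m$, $m=|S_B|b^2$, with $\mathbf{X}_{ij}$ the $b\times b$ block for index $(i,j)$. The map $\mathbf{h}:D_B\to\mathbb{R}^m$ is given blockwise by $\mathbf{H}_{ij}(\mathbf{x})=(\mathbf{A}_{ij}-\sum_{k=1}^{j-1}\mathbf{X}_{ik}\mathbf{X}_{kj})\mathbf{X}_{jj}^{-1}$ for $i>j$ and $\mathbf{H}_{ij}(\mathbf{x})=\mathbf{A}_{ij}-\sum_{k=1}^{i-1}\mathbf{X}_{ik}\mathbf{X}_{kj}$ for $i\le j$, on $D_B:=\{\mathbf{x}: \mathbf{X}_{jj}\text{ nonsingular for all diagonal blocks}\}$. Its fixed points are the block ILU factorizations with pattern $S_B$. *)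

theory Defs
  imports "HOL-Analysis.Analysis"
begin

text \<open>There are N block rows/columns, indexed 0..N-1 (0-based);
 each block is a b x b real matrix, with b = CARD('b). The unknown vector x in R^m is represented by the blocks
 x (i,j) for (i,j) in S_B; values of x outside S_B are irrelevant (they are
 treated as zero blocks).\<close>

type_synonym 'b blk = "real ^'b ^'b"

definition blk_of :: "(nat \<times> nat) set \<Rightarrow> (nat \<times> nat \<Rightarrow> 'b::finite blk) \<Rightarrow> nat \<Rightarrow> nat \<Rightarrow> 'b blk" where
  "blk_of SB x i k = (if (i, k) \<in> SB then x (i, k) else 0)"

definition hmap :: "(nat \<Rightarrow> nat \<Rightarrow> 'b::finite blk) \<Rightarrow> (nat \<times> nat) set
      \<Rightarrow> (nat \<times> nat \<Rightarrow> 'b blk) \<Rightarrow> (nat \<times> nat \<Rightarrow> 'b blk)" where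
  "hmap A SB x = (\<lambda>(i, j).
     if (i, j) \<in> SB then
       (if j < i then
          (A i j - (\<Sum>k<j. blk_of SB x i k ** blk_of SB x k j)) ** matrix_inv (x (j, j))
        else A i j - (\<Sum>k<i. blk_of SB x i k ** blk_of SB x k j))
     else 0)"

definition in_DB :: "nat \<Rightarrow> (nat \<times> nat \<Rightarrow> 'b::finite blk) \<Rightarrow> bool" where
  "in_DB N x \<longleftrightarrow> (\<forall>j<N. invertible (x (j, j)))"

definition point_of_attraction ::
  "nat \<Rightarrow> (nat \<times> nat) set \<Rightarrow> ((nat \<times> nat \<Rightarrow> 'b::finite blk) \<Rightarrow> (nat \<times> nat \<Rightarrow> 'b blk))
     \<Rightarrow> (nat \<times> nat \<Rightarrow> 'b blk) \<Rightarrow> bool" where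
  "point_of_attraction N SB h xs \<longleftrightarrow>
     (\<exists>\<epsilon>>0. \<forall>x0. (\<forall>(i, j)\<in>SB. dist (x0 (i, j)) (xs (i, j)) < \<epsilon>) \<longrightarrow>
        (\<forall>p. in_DB N ((h ^^ p) x0)) \<and>
        (\<forall>(i, j)\<in>SB. (\<lambda>p. (h ^^ p) x0 (i, j)) \<longlonglongrightarrow> xs (i, j)))"

end

theory Submission
  imports Defs
begin

lemma tendsto_mmult:
  fixes f g :: "'a \<Rightarrow> real^'n::finite^'n"
  assumes "(f \<longlongrightarrow> A) F" "(g \<longlongrightarrow> B) F"
  shows "((\<lambda>x. f x ** g x) \<longlongrightarrow> A ** B) F"
  unfolding matrix_matrix_mult_def
  by (intro tendsto_vec_lambda tendsto_sum tendsto_mult tendsto_vec_nth assms)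

lemma tendsto_if_const:
  "(g \<longlongrightarrow> a) F \<Longrightarrow> ((\<lambda>x. if b then c else g x) \<longlongrightarrow> (if b then c else a)) F"
  by (cases b) auto

lemma tendsto_det:
  fixes f :: "'a \<Rightarrow> real^'n::finite^'n"
  assumes "(f \<longlongrightarrow> A) F"
  shows "((\<lambda>x. det (f x)) \<longlongrightarrow> det A) F"
  unfolding det_def
  by (intro tendsto_sum tendsto_mult tendsto_const tendsto_prod tendsto_vec_nth assms)

lemma matrix_inv_cramer:
  fixes A :: "real^'n::finite^'n"
  assumes d: "det A \<noteq> 0"
  shows "matrix_inv A = (\<chi> r c. det (\<chi> i j. if j = r then mat 1 $ i $ c else A$i$j) / det A)"
proof -
  have inv: "invertible A" using d invertible_det_nz by blast
  then have AB: "A ** matrix_inv A = mat 1"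
    unfolding invertible_def matrix_inv_def by (rule someI_ex[where P="\<lambda>A'. A ** A' = mat 1 \<and> A' ** A = mat 1", THEN conjunct1])
  show ?thesis
  proof (subst vec_eq_iff, intro allI, subst vec_eq_iff, intro allI)
    fix r c
    have "A *v (\<chi> r. matrix_inv A $ r $ c) = (\<chi> i. mat 1 $ i $ c)"
      using AB by (simp add: vec_eq_iff matrix_vector_mult_def matrix_matrix_mult_def)
    then have "(\<chi> r. matrix_inv A $ r $ c) = (\<chi> k. det(\<chi> i j. if j=k then (\<chi> i. mat 1 $ i $ c)$i else A$i$j) / det A)"
      using cramer[OF d] by blast
    then have "(\<chi> r. matrix_inv A $ r $ c) $ r = (\<chi> k. det(\<chi> i j. if j=k then (\<chi> i. mat 1 $ i $ c)$i else A$i$j) / det A) $ r"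
      by simp
    moreover have "(\<chi> i j. if j = r then (\<chi> i. mat 1 $ i $ c) $ i else A $ i $ j) = (\<chi> i j. if j = r then mat 1 $ i $ c else A $ i $ j)"
      by (simp add: vec_eq_iff)
    ultimately show "matrix_inv A $ r $ c = (\<chi> r c. det (\<chi> i j. if j = r then mat 1 $ i $ c else A$i$j) / det A) $ r $ c"
      by simp
  qed
qed

lemma tendsto_matrix_inv:
  fixes f :: "'a \<Rightarrow> real^'n::finite^'n"
  assumes f: "(f \<longlongrightarrow> A) F" and d: "det A \<noteq> 0"
  shows "((\<lambda>x. matrix_inv (f x)) \<longlongrightarrow> matrix_inv A) F"
proof -
  have ev: "eventually (\<lambda>x. det (f x) \<noteq> 0) F"
    using tendsto_imp_eventually_ne[OF tendsto_det[OF f] d] .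
  have "((\<lambda>x. (\<chi> r c. det (\<chi> i j. if j = r then mat 1 $ i $ c else f x $i$j) / det (f x)))
     \<longlongrightarrow> (\<chi> r c. det (\<chi> i j. if j = r then mat 1 $ i $ c else A$i$j) / det A)) F"
    by (intro tendsto_vec_lambda tendsto_divide tendsto_det tendsto_if_const tendsto_const tendsto_vec_nth f d)
  then have "((\<lambda>x. (\<chi> r c. det (\<chi> i j. if j = r then mat 1 $ i $ c else f x $i$j) / det (f x)))
     \<longlongrightarrow> matrix_inv A) F" using matrix_inv_cramer[OF d] by simp
  then show ?thesis
    by (rule Lim_transform_eventually) (use ev in \<open>auto elim!: eventually_mono simp: matrix_inv_cramer\<close>)
qed

definition closeB :: "(nat \<times> nat) set \<Rightarrow> (nat \<times> nat \<Rightarrow> 'b::finite blk) \<Rightarrow> real \<Rightarrow> (nat \<times> nat \<Rightarrow> 'b blk) \<Rightarrow> bool" where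
  "closeB SB xs d x \<longleftrightarrow> (\<forall>(i, j)\<in>SB. dist (x (i, j)) (xs (i, j)) < d)"

definition FB :: "(nat \<times> nat) set \<Rightarrow> (nat \<times> nat \<Rightarrow> 'b::finite blk) \<Rightarrow> (nat \<times> nat \<Rightarrow> 'b blk) filter" where
  "FB SB xs = (INF d\<in>{0<..}. principal {x. closeB SB xs d x})"

lemma eventually_FB:
  "eventually P (FB SB xs) \<longleftrightarrow> (\<exists>d>0. \<forall>x. closeB SB xs d x \<longrightarrow> P x)"
  unfolding FB_def
  apply (subst eventually_INF_base)
    apply (metis empty_iff greaterThan_iff zero_less_one)
   apply (rule_tac x="min a b" in bexI)
    apply (auto simp: closeB_def)[2]
  apply (auto simp: eventually_principal)
  done

lemma tendsto_coord_FB: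
  assumes "(i, j) \<in> SB"
  shows "((\<lambda>x. x (i, j)) \<longlongrightarrow> xs (i, j)) (FB SB xs)"
proof (rule tendstoI)
  fix e :: real assume "e > 0"
  then show "eventually (\<lambda>x. dist (x (i, j)) (xs (i, j)) < e) (FB SB xs)"
    using assms unfolding eventually_FB closeB_def by auto
qed

lemma tendsto_blk_FB:
  "((\<lambda>x. blk_of SB x i k) \<longlongrightarrow> blk_of SB xs i k) (FB SB xs)"
  unfolding blk_of_def by (cases "(i, k) \<in> SB") (auto intro: tendsto_coord_FB)

definition lev :: "nat \<times> nat \<Rightarrow> nat" where
  "lev ij = (if snd ij < fst ij then 2 * snd ij + 1 else 2 * fst ij)"

lemma blk_eq_lev:
  assumes "\<forall>(a, b)\<in>SB. lev (a, b) < L \<longrightarrow> y (a, b) = xs (a, b)" and "lev (a, b) < L"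
  shows "blk_of SB y a b = blk_of SB xs a b"
  using assms unfolding blk_of_def by auto

lemma exact_iter:
  assumes SBN: "\<forall>i<N. (i, i) \<in> SB" and SBsub: "SB \<subseteq> {..<N} \<times> {..<N}"
    and fixp: "\<forall>(i, j)\<in>SB. hmap A SB xs (i, j) = xs (i, j)"
  shows "\<forall>(a, b)\<in>SB. lev (a, b) < p \<longrightarrow> (hmap A SB ^^ p) x (a, b) = xs (a, b)"
proof (induction p)
  case 0
  then show ?case by simp
next
  case (Suc p)
  define y where "y = (hmap A SB ^^ p) x"
  have IH: "\<forall>(a, b)\<in>SB. lev (a, b) < p \<longrightarrow> y (a, b) = xs (a, b)" using Suc y_def by simp
  show ?case
  proof (intro ballI impI, clarify)
    fix i j assume ij: "(i, j) \<in> SB" and l: "lev (i, j) < Suc p"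
    have "(hmap A SB ^^ Suc p) x (i, j) = hmap A SB y (i, j)" by (simp add: y_def)
    also have "\<dots> = hmap A SB xs (i, j)"
    proof (cases "j < i")
      case True
      have jN: "j < N" using ij SBsub by auto
      have "(j, j) \<in> SB" using SBN jN by auto
      moreover have "lev (j, j) < p" using l True by (simp add: lev_def)
      ultimately have jj: "y (j, j) = xs (j, j)" using IH by auto
      have "(\<Sum>k<j. blk_of SB y i k ** blk_of SB y k j) = (\<Sum>k<j. blk_of SB xs i k ** blk_of SB xs k j)"
      proof (rule sum.cong[OF refl])
        fix k assume "k \<in> {..<j}"
        then have "lev (i, k) < p" "lev (k, j) < p" using True l by (auto simp: lev_def)
        then show "blk_of SB y i k ** blk_of SB y k j = blk_of SB xs i k ** blk_of SB xs k j"
          using blk_eq_lev[OF IH] by metis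
      qed
      then show ?thesis using True ij jj by (simp add: hmap_def)
    next
      case False
      have "(\<Sum>k<i. blk_of SB y i k ** blk_of SB y k j) = (\<Sum>k<i. blk_of SB xs i k ** blk_of SB xs k j)"
      proof (rule sum.cong[OF refl])
        fix k assume "k \<in> {..<i}"
        then have "lev (i, k) < p" "lev (k, j) < p" using False l by (auto simp: lev_def)
        then show "blk_of SB y i k ** blk_of SB y k j = blk_of SB xs i k ** blk_of SB xs k j"
          using blk_eq_lev[OF IH] by metis
      qed
      then show ?thesis using False ij by (simp add: hmap_def)
    qed
    also have "\<dots> = xs (i, j)" using fixp ij by auto
    finally show "(hmap A SB ^^ Suc p) x (i, j) = xs (i, j)" .
  qed
qed

theorem theorem5:
  fixes N :: nat and A :: "nat \<Rightarrow> nat \<Rightarrow> real ^'b::finite ^'b"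
    and SB :: "(nat \<times> nat) set" and xs :: "nat \<times> nat \<Rightarrow> real ^'b ^'b"
  assumes "SB \<subseteq> {..<N} \<times> {..<N}"
    and "\<forall>i<N. (i, i) \<in> SB"
    and "in_DB N xs"
    and "\<forall>(i, j)\<in>SB. hmap A SB xs (i, j) = xs (i, j)"
  shows "point_of_attraction N SB (hmap A SB) xs"
proof -
  note SBsub = assms(1) and SBN = assms(2) and DB = assms(3) and fixp = assms(4)
  let ?h = "hmap A SB" and ?F = "FB SB xs"
  have finSB: "finite SB" using SBsub finite_subset by blast
  have detnz: "det (xs (j, j)) \<noteq> 0" if "j < N" for j
    using DB that invertible_det_nz unfolding in_DB_def by blast
  have htend: "((\<lambda>x. ?h x (i, j)) \<longlongrightarrow> xs (i, j)) ?F" if ij: "(i, j) \<in> SB" for i j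
  proof -
    have "((\<lambda>x. ?h x (i, j)) \<longlongrightarrow> ?h xs (i, j)) ?F"
    proof (cases "j < i")
      case True
      have "j < N" using ij SBsub by auto
      then show ?thesis using True ij
        by (simp add: hmap_def)
           (intro tendsto_mmult tendsto_diff tendsto_const tendsto_sum tendsto_blk_FB
              tendsto_matrix_inv tendsto_coord_FB detnz SBN[rule_format])
    next
      case False
      then show ?thesis using ij
        by (simp add: hmap_def)
           (intro tendsto_mmult tendsto_diff tendsto_const tendsto_sum tendsto_blk_FB)
    qed
    then show ?thesis using fixp ij by auto
  qed
  have hlim: "filterlim ?h ?F ?F"
  proof (subst filterlim_iff, intro allI impI)
    fix P assume "eventually P ?F"
    then obtain d where d: "d > 0" "\<And>x. closeB SB xs d x \<Longrightarrow> P x" unfolding eventually_FB by blast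
    have "eventually (\<lambda>x. \<forall>ij\<in>SB. dist (?h x ij) (xs ij) < d) ?F"
      using finSB
    proof (rule eventually_ball_finite, intro ballI)
      fix ij assume "ij \<in> SB"
      then show "eventually (\<lambda>x. dist (?h x ij) (xs ij) < d) ?F"
        using htend[of "fst ij" "snd ij"] d(1) tendstoD by auto
    qed
    then show "eventually (\<lambda>x. P (?h x)) ?F"
      by (rule eventually_mono) (auto intro: d(2) simp: closeB_def)
  qed
  have iterlim: "filterlim (?h ^^ p) ?F ?F" for p
  proof (induction p)
    case 0
    then show ?case by (simp add: filterlim_ident)
  next
    case (Suc p)
    then show ?case using filterlim_compose[OF hlim Suc] by (simp add: comp_def)
  qed
  have evDB: "eventually (in_DB N) ?F"
    unfolding in_DB_def
  proof -
    have "eventually (\<lambda>x. \<forall>j\<in>{..<N}. det (x (j, j)) \<noteq> 0) ?F"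
      by (rule eventually_ball_finite) (auto intro!: tendsto_imp_eventually_ne tendsto_det tendsto_coord_FB SBN[rule_format] simp: detnz)
    then show "eventually (\<lambda>x. \<forall>j<N. invertible (x (j, j))) ?F"
      by (rule eventually_mono) (auto simp: invertible_det_nz)
  qed
  have "eventually (\<lambda>x. \<forall>p\<in>{..<2*N}. in_DB N ((?h ^^ p) x)) ?F"
    by (rule eventually_ball_finite) (auto intro: filterlim_iff[THEN iffD1, OF iterlim, rule_format, OF evDB])
  then obtain d where d: "d > 0" "\<And>x. closeB SB xs d x \<Longrightarrow> \<forall>p<2*N. in_DB N ((?h ^^ p) x)"
    unfolding eventually_FB by auto
  have levN: "lev (a, b) < 2 * N" if "(a, b) \<in> SB" for a b
    using that SBsub by (auto simp: lev_def)
  have exact: "(?h ^^ p) x (a, b) = xs (a, b)" if "(a, b) \<in> SB" "p \<ge> 2 * N" for p x a b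
    using exact_iter[OF SBN SBsub fixp, of p x] that levN[OF that(1)] by auto
  show ?thesis
    unfolding point_of_attraction_def
  proof (rule exI[of _ d], rule conjI[OF d(1)], intro allI impI conjI)
    fix x0 assume c: "\<forall>(i, j)\<in>SB. dist (x0 (i, j)) (xs (i, j)) < d"
    fix p show "in_DB N ((?h ^^ p) x0)"
    proof (cases "p < 2 * N")
      case True then show ?thesis using d(2)[of x0] c by (auto simp: closeB_def)
    next
      case False
      then show ?thesis using DB exact SBN unfolding in_DB_def by auto
    qed
  next
    fix x0 assume c: "\<forall>(i, j)\<in>SB. dist (x0 (i, j)) (xs (i, j)) < d"
    show "\<forall>(i, j)\<in>SB. (\<lambda>p. (?h ^^ p) x0 (i, j)) \<longlonglongrightarrow> xs (i, j)"
    proof (clarify)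
      fix i j assume "(i, j) \<in> SB"
      then show "(\<lambda>p. (?h ^^ p) x0 (i, j)) \<longlonglongrightarrow> xs (i, j)"
        by (intro tendsto_eventually) (auto simp: eventually_sequentially intro!: exI[of _ "2*N"] exact)
    qed
  qed
qed

end
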